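(* Let $(E,\rho_\theta)$ be a complete $b_v(\theta)$ metric space whose function $\theta$ is bounded, and let $S:E\to E$ satisfy $\rho_\theta(Su,Sw)\le\alpha\rho_\theta(u,w)+\beta\rho_\theta(u,Su)+\gamma\rho_\theta(w,Sw)$ for all $u,w\in E$, where $\alpha,\beta,\gamma\ge0$ are constants with $\alpha+\beta+\gamma<1$, and where $\Gamma_1<\frac1{\Gamma_2}$ with $\Gamma_1=\min\{\beta,\gamma\}$ and $\Gamma_2=\max\{\theta(u,Su),\theta(Su,u)\}$ (for all $u\in E$). Then $S$ has a unique fixed point. Moreover, for any $u_0\in E$, the sequence $\{u_n\}$ defined by $u_n=Su_{n-1}$ converges to the unique fixed point of $S$.
   Context: Let $E$ be a nonempty set, $\theta:E\times E\to[1,\infty)$ a function and $v\in\mathbb{N}$. A map $\rho_\theta:E\times E\to[0,\infty)$ is a $b_v(\theta)$ metric (and $(E,\rho_\theta)$ a $b_v(\theta)$ metric space) if for all $u,w\in E$: $\rho_\theta(u,w)=0$ iff $u=w$; $\rho_\theta(u,w)=\rho_\theta(w,u)$; and for all $u,z_1,\dots,z_v,w\in E$ pairwise distinct, $\rho_\theta(u,w)\le\theta(u,w)[\rho_\theta(u,z_1)+\rho_\theta(z_1,z_2)+\dots+\rho_\theta(z_{v-1},z_v)+\rho_\theta(z_v,w)]$. A sequence $\{u_n\}$ converges to $u$ if for every $\varepsilon>0$ there is $n_0$ with $\rho_\theta(u_n,u)<\varepsilon$ for all $n\ge n_0$; it is Cauchy if for every $\varepsilon>0$ there is $n_0$ with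 $\rho_\theta(u_n,u_{n+p})<\varepsilon$ for all $n\ge n_0$ and $p>0$; the space is complete if every Cauchy sequence converges in $E$. *)

theory Defs
  imports Complex_Main
begin

text \<open>b_v(theta) metric on the whole type 'a (the set E is the universe of 'a).
  The points u, z_1..z_v, w are encoded as p 0 = u, p i = z i (1 \<le> i \<le> v),
  p (v+1) = w; pairwise distinctness is injectivity of p on {0..v+1}.\<close>
definition bv_metric :: "nat \<Rightarrow> ('a \<Rightarrow> 'a \<Rightarrow> real) \<Rightarrow> ('a \<Rightarrow> 'a \<Rightarrow> real) \<Rightarrow> bool" where
  "bv_metric v \<theta> \<rho> \<longleftrightarrow>
     (\<forall>u w. 1 \<le> \<theta> u w) \<and>
     (\<forall>u w. 0 \<le> \<rho> u w) \<and>
     (\<forall>u w. \<rho> u w = 0 \<longleftrightarrow> u = w) \<and>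
     (\<forall>u w. \<rho> u w = \<rho> w u) \<and>
     (\<forall>u w (z :: nat \<Rightarrow> 'a).
        let p = (\<lambda>i. if i = 0 then u else if i = Suc v then w else z i) in
        inj_on p {0..Suc v} \<longrightarrow>
        \<rho> u w \<le> \<theta> u w * (\<Sum>i\<le>v. \<rho> (p i) (p (Suc i))))"

definition bv_converges :: "('a \<Rightarrow> 'a \<Rightarrow> real) \<Rightarrow> (nat \<Rightarrow> 'a) \<Rightarrow> 'a \<Rightarrow> bool" where
  "bv_converges \<rho> x u \<longleftrightarrow> (\<forall>\<epsilon>>0. \<exists>n0. \<forall>n\<ge>n0. \<rho> (x n) u < \<epsilon>)"

definition bv_cauchy :: "('a \<Rightarrow> 'a \<Rightarrow> real) \<Rightarrow> (nat \<Rightarrow> 'a) \<Rightarrow> bool" where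
  "bv_cauchy \<rho> x \<longleftrightarrow> (\<forall>\<epsilon>>0. \<exists>n0. \<forall>n\<ge>n0. \<forall>p>0. \<rho> (x n) (x (n + p)) < \<epsilon>)"

definition bv_complete :: "('a \<Rightarrow> 'a \<Rightarrow> real) \<Rightarrow> bool" where
  "bv_complete \<rho> \<longleftrightarrow> (\<forall>x. bv_cauchy \<rho> x \<longrightarrow> (\<exists>u. bv_converges \<rho> x u))"

end

theory Submission
  imports Defs
begin

lemma bv_ineq:
  assumes "bv_metric v \<theta> \<rho>" "inj_on p {0..Suc v}"
  shows "\<rho> (p 0) (p (Suc v)) \<le> \<theta> (p 0) (p (Suc v)) * (\<Sum>i\<le>v. \<rho> (p i) (p (Suc i)))"
proof -
  define q where "q = (\<lambda>i. if i = 0 then p 0 else if i = Suc v then p (Suc v) else p i)"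
  have qp: "q = p" unfolding q_def by (rule ext) auto
  have "let q' = q in inj_on q' {0..Suc v} \<longrightarrow>
      \<rho> (p 0) (p (Suc v)) \<le> \<theta> (p 0) (p (Suc v)) * (\<Sum>i\<le>v. \<rho> (q' i) (q' (Suc i)))"
    using assms(1) unfolding bv_metric_def q_def
    apply -
    apply (elim conjE)
    apply (erule allE[of _ "p 0"], erule allE[of _ "p (Suc v)"], erule allE[of _ p])
    apply assumption
    done
  thus ?thesis using assms(2) unfolding qp Let_def by simp
qed

lemma geo_rec:
  fixes e :: "nat \<Rightarrow> real"
  assumes "\<And>j. e (Suc j) \<le> a * e j + c * r ^ j" "0 \<le> a" "a < r" "0 \<le> c"
  shows "e j \<le> a ^ j * e 0 + c / (r - a) * r ^ j"
proof (induction j)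
  case 0
  then show ?case using assms by simp
next
  case (Suc j)
  have "e (Suc j) \<le> a * e j + c * r ^ j" by (rule assms(1))
  also have "\<dots> \<le> a * (a ^ j * e 0 + c / (r - a) * r ^ j) + c * r ^ j"
    using mult_left_mono[OF Suc assms(2)] by linarith
  also have "\<dots> = a ^ Suc j * e 0 + (a * (c / (r - a)) + c) * r ^ j"
    by (simp add: algebra_simps)
  also have "\<dots> = a ^ Suc j * e 0 + c / (r - a) * r ^ Suc j"
  proof -
    have eq: "a * (c / (r - a)) + c = c / (r - a) * r"
      using assms(3) by (simp add: field_simps)
    show ?thesis by (simp only: eq power_Suc mult.assoc)
  qed
  finally show ?case .
qed

lemma small_pow:
  fixes r B \<epsilon> :: real
  assumes "0 \<le> r" "r < 1" "0 \<le> B" "0 < \<epsilon>"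
  shows "\<exists>n0. \<forall>n\<ge>n0. B * r ^ n < \<epsilon>"
proof -
  obtain n0 where n0: "r ^ n0 < \<epsilon> / (B + 1)"
    using real_arch_pow_inv[of "\<epsilon> / (B + 1)" r] assms by auto
  have "B * r ^ n < \<epsilon>" if "n \<ge> n0" for n
  proof -
    have "r ^ n \<le> r ^ n0" using that assms by (simp add: power_decreasing)
    hence "B * r ^ n \<le> (B + 1) * r ^ n0" using assms
      by (meson add_increasing2 less_eq_real_def mult_mono zero_le_one zero_le_power)
    also have "\<dots> < \<epsilon>" using n0 assms by (simp add: field_simps)
    finally show ?thesis .
  qed
  thus ?thesis by blast
qed

lemma eventually_neq:
  assumes "inj (x :: nat \<Rightarrow> 'a)"
  shows "\<exists>n0. \<forall>j\<ge>n0. x j \<noteq> y"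
proof (cases "\<exists>j0. x j0 = y")
  case True
  then obtain j0 where "x j0 = y" by blast
  then show ?thesis using assms
    by (metis injD not_less_eq_eq)
next
  case False
  then show ?thesis by blast
qed

lemma eps_le:
  fixes y c :: real
  assumes "\<And>\<epsilon>. \<epsilon> > 0 \<Longrightarrow> y \<le> c * \<epsilon>" "c > 0"
  shows "y \<le> 0"
proof (rule ccontr)
  assume "\<not> y \<le> 0"
  hence "y > 0" by simp
  have "y \<le> c * (y / (2 * c))" using assms(1)[of "y / (2*c)"] \<open>y > 0\<close> assms(2) by simp
  also have "\<dots> = y / 2" using assms(2) by simp
  finally show False using \<open>y > 0\<close> by simp
qed

theorem mainTheorem11:
  fixes v :: nat and \<theta> \<rho> :: "'a \<Rightarrow> 'a \<Rightarrow> real" and S :: "'a \<Rightarrow> 'a"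
    and \<alpha> \<beta> \<gamma> :: real
  assumes v: "v \<ge> 1"
    and metric: "bv_metric v \<theta> \<rho>"
    and complete: "bv_complete \<rho>"
    and bounded: "\<exists>K. \<forall>u w. \<theta> u w \<le> K"
    and contr: "\<forall>u w. \<rho> (S u) (S w) \<le> \<alpha> * \<rho> u w + \<beta> * \<rho> u (S u) + \<gamma> * \<rho> w (S w)"
    and nonneg: "\<alpha> \<ge> 0" "\<beta> \<ge> 0" "\<gamma> \<ge> 0"
    and sum_lt: "\<alpha> + \<beta> + \<gamma> < 1"
    and Gamma: "\<forall>u. min \<beta> \<gamma> < 1 / max (\<theta> u (S u)) (\<theta> (S u) u)"
  shows "(\<exists>!x. S x = x) \<and>
         (\<forall>u0 x. S x = x \<longrightarrow> bv_converges \<rho> (\<lambda>n. (S ^^ n) u0) x)"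
proof -
  have th1: "\<And>u w. 1 \<le> \<theta> u w" and rho0: "\<And>u w. 0 \<le> \<rho> u w"
    and rhoeq: "\<And>u w. \<rho> u w = 0 \<longleftrightarrow> u = w" and rsym: "\<And>u w. \<rho> u w = \<rho> w u"
    using metric unfolding bv_metric_def by auto
  have rr: "\<And>u. \<rho> u u = 0" using rhoeq by simp
  obtain K where K: "\<And>u w. \<theta> u w \<le> K" using bounded by auto
  have K1: "1 \<le> K" using K[of undefined undefined] th1[of undefined undefined] by linarith
  have C: "\<And>u w. \<rho> (S u) (S w) \<le> \<alpha> * \<rho> u w + \<beta> * \<rho> u (S u) + \<gamma> * \<rho> w (S w)"
    using contr by blast
  have g1: "\<gamma> < 1" using sum_lt nonneg by linarith
  have a1: "\<alpha> < 1" using sum_lt nonneg by linarith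
  define k where "k = (\<alpha> + \<beta>) / (1 - \<gamma>)"
  have k0: "0 \<le> k" unfolding k_def using nonneg g1 by simp
  have k1: "k < 1" unfolding k_def using sum_lt g1 by (simp add: pos_divide_less_eq)
  define r where "r = (1 + max \<alpha> k) / 2"
  have r: "\<alpha> < r" "k < r" "r < 1" "0 \<le> r"
    unfolding r_def using k0 k1 a1 nonneg by (auto simp: max_def)
  have uniq: "a = b" if a: "S a = a" and b: "S b = b" for a b
  proof (rule ccontr)
    assume "a \<noteq> b"
    then have pos: "\<rho> a b > 0" using rho0[of a b] rhoeq[of a b] by linarith
    have "\<rho> a b \<le> \<alpha> * \<rho> a b" using C[of a b] a b rr by simp
    moreover have "\<alpha> * \<rho> a b < 1 * \<rho> a b"
      by (rule mult_strict_right_mono[OF a1 pos])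
    ultimately show False by simp
  qed
  define X where "X u0 n = (S ^^ n) u0" for u0 n
  have XS: "X u0 (Suc n) = S (X u0 n)" for u0 n by (simp add: X_def)
  define d where "d u0 n = \<rho> (X u0 n) (X u0 (Suc n))" for u0 n
  have d0: "0 \<le> d u0 n" for u0 n using rho0 d_def by simp
  have dstep: "d u0 (Suc n) \<le> k * d u0 n" for u0 n
  proof -
    have "\<rho> (S (X u0 n)) (S (X u0 (Suc n))) \<le> \<alpha> * \<rho> (X u0 n) (X u0 (Suc n))
        + \<beta> * \<rho> (X u0 n) (S (X u0 n)) + \<gamma> * \<rho> (X u0 (Suc n)) (S (X u0 (Suc n)))"
      by (rule C)
    hence "d u0 (Suc n) \<le> \<alpha> * d u0 n + \<beta> * d u0 n + \<gamma> * d u0 (Suc n)"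
      by (simp add: d_def XS)
    hence h: "(1 - \<gamma>) * d u0 (Suc n) \<le> (\<alpha> + \<beta>) * d u0 n" by (simp add: algebra_simps)
    have "d u0 (Suc n) \<le> ((\<alpha> + \<beta>) * d u0 n) / (1 - \<gamma>)"
      using h g1 by (simp add: pos_le_divide_eq algebra_simps)
    thus ?thesis by (simp add: k_def)
  qed
  have dgeo: "d u0 n \<le> k ^ n * d u0 0" for u0 n
  proof (induction n)
    case 0
    then show ?case by simp
  next
    case (Suc n)
    have "d u0 (Suc n) \<le> k * d u0 n" by (rule dstep)
    also have "\<dots> \<le> k * (k ^ n * d u0 0)" by (rule mult_left_mono[OF Suc.IH k0])
    also have "\<dots> = k ^ Suc n * d u0 0" by simp
    finally show ?case .
  qed
  have dgeor: "d u0 n \<le> d u0 0 * r ^ n" for u0 n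
  proof -
    have "k ^ n \<le> r ^ n" by (rule power_mono) (use k0 r in auto)
    hence "k ^ n * d u0 0 \<le> r ^ n * d u0 0" by (rule mult_right_mono) (rule d0)
    thus ?thesis using dgeo[of u0 n] by (simp add: mult.commute)
  qed
  have dsmall: "\<exists>n0. \<forall>n\<ge>n0. d u0 n < \<epsilon>" if eps: "\<epsilon> > 0" for u0 \<epsilon>
  proof -
    obtain n0 where n0: "\<forall>n\<ge>n0. d u0 0 * r ^ n < \<epsilon>"
      using small_pow[OF r(4) r(3) d0[of u0 0] eps] by blast
    show ?thesis using n0 dgeor le_less_trans by blast
  qed
  have conv: "bv_converges \<rho> (X u0) p" if p: "S p = p" for u0 p
  proof -
    define e where "e n = \<rho> (X u0 n) p" for n
    have estep: "e (Suc j) \<le> \<alpha> * e j + (\<beta> * d u0 0) * r ^ j" for j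
    proof -
      have "e (Suc j) \<le> \<alpha> * e j + \<beta> * d u0 j + \<gamma> * \<rho> p p"
        using C[of "X u0 j" p] by (simp add: e_def d_def XS p)
      moreover have "\<beta> * d u0 j \<le> \<beta> * (d u0 0 * r ^ j)"
        by (rule mult_left_mono[OF dgeor nonneg(2)])
      moreover have "\<beta> * (d u0 0 * r ^ j) = (\<beta> * d u0 0) * r ^ j" by simp
      ultimately show ?thesis using rr by simp
    qed
    define B where "B = e 0 + (\<beta> * d u0 0) / (r - \<alpha>)"
    have B0: "0 \<le> B" unfolding B_def e_def using rho0 nonneg d0 r(1)
      by (simp add: add_nonneg_nonneg)
    have eB: "\<rho> (X u0 n) p \<le> B * r ^ n" for n
    proof -
      have "e n \<le> \<alpha> ^ n * e 0 + (\<beta> * d u0 0) / (r - \<alpha>) * r ^ n"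
        by (rule geo_rec[OF estep nonneg(1) r(1) mult_nonneg_nonneg[OF nonneg(2) d0[of u0 0]]])
      moreover have "\<alpha> ^ n \<le> r ^ n" by (rule power_mono) (use nonneg r in auto)
      hence "\<alpha> ^ n * e 0 \<le> r ^ n * e 0" by (rule mult_right_mono) (simp add: e_def rho0)
      ultimately show ?thesis unfolding B_def e_def by (simp add: algebra_simps)
    qed
    show ?thesis unfolding bv_converges_def
    proof (intro allI impI)
      fix \<epsilon> :: real assume "\<epsilon> > 0"
      from small_pow[OF r(4) r(3) B0 this] obtain n0 where "\<forall>n\<ge>n0. B * r ^ n < \<epsilon>" by blast
      thus "\<exists>n0. \<forall>n\<ge>n0. \<rho> (X u0 n) p < \<epsilon>" using eB le_less_trans by blast
    qed
  qed
  have exist: "\<exists>p. S p = p"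
  proof -
    define u0 :: 'a where "u0 = undefined"
    show ?thesis
    proof (cases "\<exists>n. X u0 (Suc n) = X u0 n")
      case True
      then obtain n where "X u0 (Suc n) = X u0 n" by blast
      then show ?thesis using XS by metis
    next
      case False
      define x where "x = X u0"
      have xS: "x (Suc n) = S (x n)" for n by (simp add: x_def XS)
      have dx: "d u0 n = \<rho> (x n) (x (Suc n))" for n by (simp add: x_def d_def)
      have dpos: "d u0 n > 0" for n
      proof -
        have ne: "X u0 n \<noteq> X u0 (Suc n)" using False by metis
        have "\<rho> (X u0 n) (X u0 (Suc n)) \<noteq> 0" using ne rhoeq by simp
        thus ?thesis using rho0[of "X u0 n" "X u0 (Suc n)"] by (simp add: d_def less_le)
      qed
      have dshift: "d u0 (i + t) \<le> k ^ t * d u0 i" for i t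
      proof (induction t)
        case 0
        then show ?case by simp
      next
        case (Suc t)
        have "d u0 (i + Suc t) \<le> k * d u0 (i + t)" using dstep[of u0 "i + t"] by simp
        also have "\<dots> \<le> k * (k ^ t * d u0 i)" by (rule mult_left_mono[OF Suc.IH k0])
        also have "\<dots> = k ^ Suc t * d u0 i" by simp
        finally show ?case .
      qed
      have H: False if ab: "a < b" and xab: "x a = x b" for a b
      proof -
        have "x (Suc a) = x (Suc b)" using xS xab by simp
        hence deq: "d u0 b = d u0 a" using dx xab by simp
        obtain t where b: "b = Suc (a + t)" using less_imp_Suc_add[OF ab] by blast
        have "d u0 b \<le> k ^ Suc t * d u0 a" using dshift[of a "Suc t"] b by simp
        also have "\<dots> \<le> k * d u0 a"
        proof -
          have "k ^ t \<le> 1" using k0 k1 by (simp add: power_le_one)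
          hence "k * k ^ t \<le> k * 1" by (rule mult_left_mono) (rule k0)
          thus ?thesis using d0[of u0 a] by (simp add: mult_right_mono)
        qed
        also have "\<dots> < 1 * d u0 a" by (rule mult_strict_right_mono[OF k1 dpos])
        finally show False using deq by simp
      qed
      have injx: "inj x"
      proof (rule injI)
        fix i j assume eq: "x i = x j"
        show "i = j"
        proof (rule ccontr)
          assume "i \<noteq> j"
          then show False using H[of i j] H[of j i] eq by (metis linorder_neqE_nat)
        qed
      qed
      define Cc where "Cc = (\<beta> + \<gamma>) * d u0 0 / (r - \<alpha>)"
      have Cc0: "0 \<le> Cc" unfolding Cc_def using nonneg d0[of u0 0] r(1) by simp
      have shift: "\<rho> (x j) (x (m + j)) \<le> \<alpha> ^ j * \<rho> (x 0) (x m) + Cc * r ^ j" for m j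
      proof -
        define e where "e j = \<rho> (x j) (x (m + j))" for j
        have estep: "e (Suc j) \<le> \<alpha> * e j + ((\<beta> + \<gamma>) * d u0 0) * r ^ j" for j
        proof -
          have "e (Suc j) \<le> \<alpha> * e j + \<beta> * d u0 j + \<gamma> * d u0 (m + j)"
            using C[of "x j" "x (m + j)"] by (simp add: e_def dx xS)
          moreover have "\<beta> * d u0 j \<le> \<beta> * (d u0 0 * r ^ j)"
            by (rule mult_left_mono[OF dgeor nonneg(2)])
          moreover have "d u0 (m + j) \<le> d u0 0 * r ^ j"
          proof -
            have "r ^ (m + j) \<le> r ^ j" using r by (simp add: power_decreasing)
            hence "d u0 0 * r ^ (m + j) \<le> d u0 0 * r ^ j" by (rule mult_left_mono) (rule d0)
            thus ?thesis using dgeor[of u0 "m + j"] by linarith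
          qed
          hence "\<gamma> * d u0 (m + j) \<le> \<gamma> * (d u0 0 * r ^ j)"
            by (rule mult_left_mono) (rule nonneg(3))
          moreover have "\<beta> * (d u0 0 * r ^ j) + \<gamma> * (d u0 0 * r ^ j)
              = ((\<beta> + \<gamma>) * d u0 0) * r ^ j" by (simp add: algebra_simps)
          ultimately show ?thesis by linarith
        qed
        show ?thesis using geo_rec[OF estep nonneg(1) r(1) mult_nonneg_nonneg[OF _ d0[of u0 0]], of j] nonneg by (simp add: e_def Cc_def)
      qed
      obtain N0 where N0: "\<forall>n\<ge>N0. K * \<alpha> ^ n < 1/2"
        using small_pow[of \<alpha> K "1/2"] nonneg a1 K1 by auto
      define N where "N = N0 + v"
      have KN: "K * \<alpha> ^ N < 1/2" "v \<le> N" using N0 N_def by auto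
      define x' where "x' i = (if i < v then x i else x N)" for i
      define A where "A = (\<Sum>i<v. \<rho> (x' i) (x' (Suc i)))"
      have A0: "0 \<le> A" unfolding A_def by (rule sum_nonneg) (simp add: rho0)
      have chainP: "\<rho> (x 0) (x P) \<le> K * (A + \<rho> (x N) (x P))" if NP: "N < P" for P
      proof -
        define f where "f i = (if i < v then i else if i = v then N else P)" for i
        define q where "q = x \<circ> f"
        have injf: "inj_on f {0..Suc v}" unfolding inj_on_def f_def using NP KN(2) by auto
        have injq: "inj_on q {0..Suc v}" unfolding q_def
          by (rule comp_inj_on[OF injf]) (rule inj_on_subset[OF injx subset_UNIV])
        have bv: "\<rho> (q 0) (q (Suc v)) \<le> \<theta> (q 0) (q (Suc v)) * (\<Sum>i\<le>v. \<rho> (q i) (q (Suc i)))"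
          by (rule bv_ineq[OF metric injq])
        have q0: "q 0 = x 0" using v by (simp add: q_def f_def)
        have qv: "q (Suc v) = x P" by (simp add: q_def f_def)
        have qv': "q v = x N" by (simp add: q_def f_def)
        have "(\<Sum>i\<le>v. \<rho> (q i) (q (Suc i))) = (\<Sum>i<v. \<rho> (q i) (q (Suc i))) + \<rho> (q v) (q (Suc v))"
          by (simp add: lessThan_Suc_atMost[symmetric])
        also have "(\<Sum>i<v. \<rho> (q i) (q (Suc i))) = A"
          unfolding A_def by (rule sum.cong) (auto simp: q_def f_def x'_def)
        finally have sum: "(\<Sum>i\<le>v. \<rho> (q i) (q (Suc i))) = A + \<rho> (x N) (x P)" using qv qv' by simp
        have "\<rho> (x 0) (x P) \<le> \<theta> (x 0) (x P) * (A + \<rho> (x N) (x P))" using bv q0 qv sum by simp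
        also have "\<dots> \<le> K * (A + \<rho> (x N) (x P))"
          by (rule mult_right_mono[OF K]) (use A0 rho0[of "x N" "x P"] in simp)
        finally show ?thesis .
      qed
      define Bn where "Bn = (\<Sum>q\<le>N. \<rho> (x 0) (x q))"
      have Bn: "\<rho> (x 0) (x q) \<le> Bn" if "q \<le> N" for q
        unfolding Bn_def by (rule member_le_sum) (use that rho0 in auto)
      have Bn0: "0 \<le> Bn" using Bn[of 0] rho0[of "x 0" "x 0"] by simp
      define M where "M = 2 * K * (A + Cc) + Bn"
      have Mexp: "M = 2 * (K * A) + 2 * (K * Cc) + Bn" by (simp add: M_def algebra_simps)
      have KA0: "0 \<le> K * A" "0 \<le> K * Cc" using K1 A0 Cc0 by simp_all
      have M0: "0 \<le> M" "Bn \<le> M" using Mexp KA0 Bn0 by linarith+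
      have bound: "\<rho> (x 0) (x P) \<le> M" for P
      proof (induction P rule: less_induct)
        case (less P)
        show ?case
        proof (cases "P \<le> N")
          case True
          then show ?thesis using Bn[OF True] M0 by linarith
        next
          case False
          hence NP: "N < P" by simp
          have IH: "\<rho> (x 0) (x (P - N)) \<le> M" using less.IH[of "P - N"] NP v KN(2) by simp
          have sh: "\<rho> (x N) (x P) \<le> \<alpha> ^ N * \<rho> (x 0) (x (P - N)) + Cc * r ^ N"
            using shift[where m="P - N" and j=N] NP by simp
          have "r ^ N \<le> 1" using r by (simp add: power_le_one)
          hence c1: "Cc * r ^ N \<le> Cc" using Cc0 by (simp add: mult_left_le)
          have c2: "\<alpha> ^ N * \<rho> (x 0) (x (P - N)) \<le> \<alpha> ^ N * M"
            by (rule mult_left_mono[OF IH]) (use nonneg in simp)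
          have c3: "K * \<rho> (x N) (x P) \<le> K * (\<alpha> ^ N * M + Cc)"
            by (rule mult_left_mono) (use sh c1 c2 K1 in linarith)+
          have c4: "K * (\<alpha> ^ N * M + Cc) = (K * \<alpha> ^ N) * M + K * Cc" by (simp add: algebra_simps)
          have c5: "(K * \<alpha> ^ N) * M \<le> (1/2) * M" by (rule mult_right_mono) (use KN M0 in simp)+
          have c6: "K * (A + \<rho> (x N) (x P)) = K * A + K * \<rho> (x N) (x P)" by (simp add: algebra_simps)
          show ?thesis using chainP[OF NP] c3 c4 c5 c6 Mexp Bn0 by linarith
        qed
      qed
      have cauchy: "bv_cauchy \<rho> x"
        unfolding bv_cauchy_def
      proof (intro allI impI)
        fix \<epsilon> :: real assume "\<epsilon> > 0"
        have MC: "0 \<le> M + Cc" using M0 Cc0 by simp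
        from small_pow[OF r(4) r(3) MC \<open>\<epsilon> > 0\<close>] obtain n0 where n0: "\<forall>n\<ge>n0. (M + Cc) * r ^ n < \<epsilon>" by blast
        have "\<rho> (x n) (x (n + p)) < \<epsilon>" if "n \<ge> n0" for n p
        proof -
          have h1: "\<rho> (x n) (x (n + p)) \<le> \<alpha> ^ n * \<rho> (x 0) (x p) + Cc * r ^ n"
            using shift[where m=p and j=n] by (simp add: add.commute)
          have h2: "\<alpha> ^ n * \<rho> (x 0) (x p) \<le> r ^ n * M"
            by (rule mult_mono) (use bound nonneg r rho0 in \<open>auto intro: power_mono\<close>)
          have h3: "(M + Cc) * r ^ n = r ^ n * M + Cc * r ^ n" by (simp add: algebra_simps)
          have h4: "(M + Cc) * r ^ n < \<epsilon>" using n0 that by blast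
          show ?thesis using h1 h2 h3 h4 by linarith
        qed
        thus "\<exists>n0. \<forall>n\<ge>n0. \<forall>p>0. \<rho> (x n) (x (n + p)) < \<epsilon>" by blast
      qed
      then obtain z where zconv: "bv_converges \<rho> x z" using complete unfolding bv_complete_def by blast
      show ?thesis
      proof (rule ccontr)
        assume nofix: "\<nexists>p. S p = p"
        hence zS: "S z \<noteq> z" by blast
        define m where "m = min \<beta> \<gamma>"
        have m0: "0 \<le> m" using nonneg m_def by simp
        have mth: "m * \<theta> z (S z) < 1"
        proof -
          have mx: "m < 1 / max (\<theta> z (S z)) (\<theta> (S z) z)" using Gamma m_def by simp
          have mle: "\<theta> z (S z) \<le> max (\<theta> z (S z)) (\<theta> (S z) z)" by simp
          have mpos: "max (\<theta> z (S z)) (\<theta> (S z) z) > 0" using th1[of z "S z"] mle by linarith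
          have "m * max (\<theta> z (S z)) (\<theta> (S z) z) < 1" using mx mpos by (simp add: pos_less_divide_eq)
          moreover have "m * \<theta> z (S z) \<le> m * max (\<theta> z (S z)) (\<theta> (S z) z)"
            by (rule mult_left_mono[OF mle m0])
          ultimately show ?thesis by linarith
        qed
        have key: "\<rho> z (S z) * (1 - m * \<theta> z (S z)) \<le> (K * (real v + 1)) * \<epsilon>" if eps: "\<epsilon> > 0" for \<epsilon>
        proof -
          obtain n1 where n1: "\<forall>j\<ge>n1. \<rho> (x j) z < \<epsilon>" using zconv eps unfolding bv_converges_def by blast
          obtain n2 where n2: "\<forall>j\<ge>n2. d u0 j < \<epsilon>" using dsmall eps by blast
          obtain n3 where n3: "\<forall>j\<ge>n3. x j \<noteq> z" using eventually_neq[OF injx] by blast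
          obtain n4 where n4: "\<forall>j\<ge>n4. x j \<noteq> S z" using eventually_neq[OF injx] by blast
          define n where "n = n1 + n2 + n3 + n4"
          have nge1: "n1 \<le> n + i" for i unfolding n_def by linarith
          have nge2: "n2 \<le> n + i" for i unfolding n_def by linarith
          have xn1: "\<rho> (x (n + i)) z < \<epsilon>" for i using n1 nge1[of i] by blast
          have xn2: "d u0 (n + i) < \<epsilon>" for i using n2 nge2[of i] by blast
          have nge3: "n3 \<le> n + i" for i unfolding n_def by linarith
          have nge4: "n4 \<le> n + i" for i unfolding n_def by linarith
          have xn3a: "x (n + i) \<noteq> z" for i using n3 nge3[of i] by blast
          have xn3: "x (n + i) \<noteq> z" "z \<noteq> x (n + i)" for i using xn3a[of i] by auto
          have xn4a: "x (n + i) \<noteq> S z" for i using n4 nge4[of i] by blast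
          have xn4: "x (n + i) \<noteq> S z" "S z \<noteq> x (n + i)" for i using xn4a[of i] by auto
          have xinj: "x (n + i) = x (n + j) \<longleftrightarrow> i = j" for i j using injx by (simp add: inj_eq)
          obtain w where vw: "v = Suc w" using v by (cases v) auto
          define p where "p i = (if i = 0 then z else if i = Suc v then S z else x (n + i))" for i
          have injp: "inj_on p {0..Suc v}"
            unfolding inj_on_def p_def using xn3 xn4 xinj zS by auto
          have bvi: "\<rho> (p 0) (p (Suc v)) \<le> \<theta> (p 0) (p (Suc v)) * (\<Sum>i\<le>v. \<rho> (p i) (p (Suc i)))"
            by (rule bv_ineq[OF metric injp])
          define f where "f i = \<rho> (p i) (p (Suc i))" for i
          have split: "(\<Sum>i\<le>v. f i) = f 0 + (\<Sum>i<w. f (Suc i)) + f (Suc w)"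
          proof -
            have "(\<Sum>i\<le>Suc w. f i) = f 0 + (\<Sum>i\<le>w. f (Suc i))" by (rule sum.atMost_Suc_shift)
            also have "(\<Sum>i\<le>w. f (Suc i)) = (\<Sum>i<w. f (Suc i)) + f (Suc w)"
              by (simp add: lessThan_Suc_atMost[symmetric])
            finally show ?thesis using vw by simp
          qed
          have f0: "f 0 < \<epsilon>" using xn1[of 1] rsym[of z "x (n + 1)"] vw by (simp add: f_def p_def)
          have fmid: "(\<Sum>i<w. f (Suc i)) \<le> real w * \<epsilon>"
          proof -
            have "f (Suc i) \<le> \<epsilon>" if "i \<in> {..<w}" for i
            proof -
              have "f (Suc i) = d u0 (n + Suc i)" using that vw by (simp add: f_def p_def dx)
              thus ?thesis using xn2[of "Suc i"] by simp
            qed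
            hence "(\<Sum>i<w. f (Suc i)) \<le> real (card {..<w}) * \<epsilon>" by (rule sum_bounded_above)
            thus ?thesis by simp
          qed
          have flast: "f (Suc w) \<le> \<epsilon> + m * \<rho> z (S z)"
          proof -
            have fl: "f (Suc w) = \<rho> (S (x (n + w))) (S z)" using vw by (simp add: f_def p_def xS)
            have e1: "\<rho> (x (n + w)) z \<le> \<epsilon>" using xn1[of w] by simp
            have e2: "d u0 (n + w) \<le> \<epsilon>" using xn2[of w] by simp
            have dd: "\<rho> (x (n + w)) (S (x (n + w))) = d u0 (n + w)" by (simp add: dx xS)
            have t1: "\<alpha> * \<rho> (x (n + w)) z \<le> \<alpha> * \<epsilon>" by (rule mult_left_mono[OF e1 nonneg(1)])
            have t2: "\<beta> * d u0 (n + w) \<le> \<beta> * \<epsilon>" by (rule mult_left_mono[OF e2 nonneg(2)])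
            have t3: "\<gamma> * d u0 (n + w) \<le> \<gamma> * \<epsilon>" by (rule mult_left_mono[OF e2 nonneg(3)])
            have s: "\<alpha> * \<epsilon> + \<beta> * \<epsilon> + \<gamma> * \<epsilon> \<le> \<epsilon>"
            proof -
              have "(\<alpha> + \<beta> + \<gamma>) * \<epsilon> \<le> 1 * \<epsilon>" using sum_lt eps by (intro mult_right_mono) auto
              thus ?thesis by (simp add: algebra_simps)
            qed
            have bm: "\<beta> * \<epsilon> \<ge> 0" "\<gamma> * \<epsilon> \<ge> 0" using nonneg eps by simp_all
            show ?thesis
            proof (cases "\<beta> \<le> \<gamma>")
              case True
              have "\<rho> (S z) (S (x (n + w))) \<le> \<alpha> * \<rho> z (x (n + w)) + \<beta> * \<rho> z (S z) + \<gamma> * \<rho> (x (n + w)) (S (x (n + w)))"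
                by (rule C)
              moreover have mb: "m = \<beta>" using True m_def by simp
              moreover have eq1: "\<rho> (S z) (S (x (n + w))) = \<rho> (S (x (n + w))) (S z)" by (rule rsym)
              moreover have eq2: "\<rho> z (x (n + w)) = \<rho> (x (n + w)) z" by (rule rsym)
              ultimately have "\<rho> (S (x (n + w))) (S z) \<le> \<alpha> * \<rho> (x (n + w)) z + m * \<rho> z (S z) + \<gamma> * d u0 (n + w)"
                using dd by (simp only:)
              thus ?thesis using fl t1 t3 s bm mb by linarith
            next
              case False
              have "\<rho> (S (x (n + w))) (S z) \<le> \<alpha> * \<rho> (x (n + w)) z + \<beta> * \<rho> (x (n + w)) (S (x (n + w))) + \<gamma> * \<rho> z (S z)"
                by (rule C)
              moreover have "m = \<gamma>" using False m_def by simp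
              ultimately have "\<rho> (S (x (n + w))) (S z) \<le> \<alpha> * \<rho> (x (n + w)) z + \<beta> * d u0 (n + w) + m * \<rho> z (S z)"
                using dd by (simp only:)
              thus ?thesis using fl t1 t2 s bm by linarith
            qed
          qed
          have sumb: "(\<Sum>i\<le>v. f i) \<le> (real v + 1) * \<epsilon> + m * \<rho> z (S z)"
          proof -
            have "(real v + 1) * \<epsilon> = \<epsilon> + real w * \<epsilon> + \<epsilon>" using vw by (simp add: algebra_simps)
            thus ?thesis using split f0 fmid flast by linarith
          qed
          have thz: "0 \<le> \<theta> z (S z)" using th1[of z "S z"] by linarith
          have "\<rho> z (S z) \<le> \<theta> z (S z) * (\<Sum>i\<le>v. f i)" using bvi by (simp add: f_def p_def)
          also have "\<dots> \<le> \<theta> z (S z) * ((real v + 1) * \<epsilon> + m * \<rho> z (S z))"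
            by (rule mult_left_mono[OF sumb thz])
          also have "\<dots> = \<theta> z (S z) * ((real v + 1) * \<epsilon>) + m * \<theta> z (S z) * \<rho> z (S z)"
            by (simp add: algebra_simps)
          also have "\<theta> z (S z) * ((real v + 1) * \<epsilon>) \<le> K * ((real v + 1) * \<epsilon>)"
            by (rule mult_right_mono[OF K]) (use eps in simp)
          finally have "\<rho> z (S z) \<le> K * ((real v + 1) * \<epsilon>) + m * \<theta> z (S z) * \<rho> z (S z)" by simp
          thus ?thesis by (simp add: algebra_simps)
        qed
        have Kp: "K * (real v + 1) > 0" using K1 by simp
        have "\<rho> z (S z) * (1 - m * \<theta> z (S z)) \<le> 0" by (rule eps_le[OF key Kp])
        moreover have "1 - m * \<theta> z (S z) > 0" using mth by simp
        ultimately have "\<rho> z (S z) \<le> 0" by (simp add: mult_le_0_iff)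
        hence "\<rho> z (S z) = 0" using rho0[of z "S z"] by linarith
        hence "z = S z" using rhoeq by simp
        thus False using zS by simp
      qed
    qed
  qed
  have conv': "bv_converges \<rho> (\<lambda>n. (S ^^ n) u0) p" if "S p = p" for u0 p
  proof -
    have eq: "X u0 = (\<lambda>n. (S ^^ n) u0)" by (rule ext) (simp add: X_def)
    have "bv_converges \<rho> (X u0) p" by (rule conv[OF that])
    thus ?thesis unfolding eq .
  qed
  show ?thesis using exist uniq conv' by blast
qed

end
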